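(* Let $\mathbf{V}$ be a finite set of random variables containing a target variable $T$, and let $\mathbf{F} = \mathbf{V} \setminus \{T\}$ be the set of features. Suppose the joint distribution $P$ of $\mathbf{V}$ can be faithfully represented by a directed maximal ancestral graph, and suppose the algorithm PFBP (described in the context) has access to a conditional independence oracle for $P$ and imposes no limit on the number of selected features. Then PFBP with no limit on the number of Runs returns the Markov blanket of $T$.
   Context: Notation: $\mathbf{X} \perp T \mid \mathbf{S}$ denotes conditional independence of $\mathbf{X}$ and $T$ given $\mathbf{S}$ under $P$. A Markov blanket of $T$ with respect to $\mathbf{V}$ is a minimal set $\mathbf{S} \subseteq \mathbf{F}$ such that $(\mathbf{V}\setminus(\mathbf{S}\cup\{T\})) \perp T \mid \mathbf{S}$; for faithful distributions it is unique. A directed maximal ancestral graph (DMAG) is a mixed graph with directed and bi-directed edges (the class of graphs closed under marginalization of Bayesian networks); it entails conditional independencies via m-separation. $P$ can be faithfully represented by a DMAG $G$ if the conditional independencies holding in $P$ are exactly those entailed by m-separation in $G$. The PFBP algorithm with an independence oracle (Parallel Forward-Backward with Pruning, with Early Dropping) operates as follows. Initially the selected set is $\mathbf{S} = \emptyset$. It performs Runs, up to a maximum number maxRuns of Runs, stopping early if a Run leaves $\mathbf{S}$ unchanged. Each Run consists of: (1) set the remaining set $\mathbf{R} = \mathbf{F} \setminus \mathbf{S}$; (2) forward phase: repeat iterations in which every $X \in \mathbf{R}$ with $X \perp T \mid \mathbf{S}$ is removed from $\mathbf{R}$ (Early Dropping), and then, if some $X \in \mathbf{R}$ is conditionally dependent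 on $T$ given $\mathbf{S}$, one such variable (the best-ranked one) is added to $\mathbf{S}$ and removed from $\mathbf{R}$; the forward phase ends when no variable is added; (3) backward phase: repeatedly, if some $X \in \mathbf{S}$ satisfies $X \perp T \mid \mathbf{S}\setminus\{X\}$, remove one such variable from $\mathbf{S}$; stop when no variable can be removed. The output is $\mathbf{S}$. "No limit on the number of Runs" means maxRuns $=\infty$, so Runs continue until $\mathbf{S}$ no longer changes. *)

theory Defs
  imports Main
begin

text \<open>A mixed graph over the vertex set V is given by a set D of directed edges
  ((a,b) \<in> D means a \<rightarrow> b) and a set B of bi-directed edges
  ((a,b) \<in> B means a \<leftrightarrow> b; B is symmetric).\<close>

definition adjacent :: "('v \<times> 'v) set \<Rightarrow> ('v \<times> 'v) set \<Rightarrow> 'v \<Rightarrow> 'v \<Rightarrow> bool" where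
  "adjacent D B a b \<longleftrightarrow> (a, b) \<in> D \<or> (b, a) \<in> D \<or> (a, b) \<in> B"

definition ancestor :: "('v \<times> 'v) set \<Rightarrow> 'v \<Rightarrow> 'v \<Rightarrow> bool" where
  "ancestor D a b \<longleftrightarrow> (a, b) \<in> D\<^sup>*"

definition arrow_into :: "('v \<times> 'v) set \<Rightarrow> ('v \<times> 'v) set \<Rightarrow> 'v \<Rightarrow> 'v \<Rightarrow> bool" where
  "arrow_into D B a b \<longleftrightarrow> (a, b) \<in> D \<or> (a, b) \<in> B"

text \<open>A path: a list of at least two distinct vertices of V, consecutive ones adjacent.
  (In a MAG there is at most one edge between two vertices, so the vertex list determines the path.)\<close>
definition is_path :: "'v set \<Rightarrow> ('v \<times> 'v) set \<Rightarrow> ('v \<times> 'v) set \<Rightarrow> 'v list \<Rightarrow> bool" where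
  "is_path V D B ps \<longleftrightarrow> length ps \<ge> 2 \<and> distinct ps \<and> set ps \<subseteq> V \<and>
     (\<forall>i. Suc i < length ps \<longrightarrow> adjacent D B (ps ! i) (ps ! Suc i))"

definition collider_at :: "('v \<times> 'v) set \<Rightarrow> ('v \<times> 'v) set \<Rightarrow> 'v list \<Rightarrow> nat \<Rightarrow> bool" where
  "collider_at D B ps i \<longleftrightarrow>
     arrow_into D B (ps ! (i - 1)) (ps ! i) \<and> arrow_into D B (ps ! Suc i) (ps ! i)"

definition m_connecting :: "('v \<times> 'v) set \<Rightarrow> ('v \<times> 'v) set \<Rightarrow> 'v set \<Rightarrow> 'v list \<Rightarrow> bool" where
  "m_connecting D B Z ps \<longleftrightarrow>
     (\<forall>i. 0 < i \<and> Suc i < length ps \<longrightarrow>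
        (collider_at D B ps i \<longrightarrow> (\<exists>z\<in>Z. ancestor D (ps ! i) z)) \<and>
        (\<not> collider_at D B ps i \<longrightarrow> ps ! i \<notin> Z))"

definition m_separated ::
  "'v set \<Rightarrow> ('v \<times> 'v) set \<Rightarrow> ('v \<times> 'v) set \<Rightarrow> 'v set \<Rightarrow> 'v set \<Rightarrow> 'v set \<Rightarrow> bool" where
  "m_separated V D B X Y Z \<longleftrightarrow>
     \<not> (\<exists>ps. is_path V D B ps \<and> hd ps \<in> X \<and> last ps \<in> Y \<and> m_connecting D B Z ps)"

definition is_dmag :: "'v set \<Rightarrow> ('v \<times> 'v) set \<Rightarrow> ('v \<times> 'v) set \<Rightarrow> bool" where
  "is_dmag V D B \<longleftrightarrow>
     D \<subseteq> V \<times> V \<and> B \<subseteq> V \<times> V \<and> sym B \<and> (\<forall>a. (a, a) \<notin> B) \<and>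
     acyclic D \<and>
     (\<forall>a b. (a, b) \<in> B \<longrightarrow> \<not> ancestor D a b) \<and>
     (\<forall>a\<in>V. \<forall>b\<in>V. a \<noteq> b \<and> \<not> adjacent D B a b \<longrightarrow>
        (\<exists>Z \<subseteq> V - {a, b}. m_separated V D B {a} {b} Z))"

text \<open>indep X Y Z means X \<perp> Y | Z under P. P is faithful to G iff for all pairwise
  disjoint X, Y, Z \<subseteq> V the independencies are exactly the m-separations.\<close>
definition faithful_to ::
  "('v set \<Rightarrow> 'v set \<Rightarrow> 'v set \<Rightarrow> bool) \<Rightarrow> 'v set \<Rightarrow> ('v \<times> 'v) set \<Rightarrow> ('v \<times> 'v) set \<Rightarrow> bool" where
  "faithful_to indep V D B \<longleftrightarrow>
     (\<forall>X Y Z. X \<subseteq> V \<and> Y \<subseteq> V \<and> Z \<subseteq> V \<and> X \<inter> Y = {} \<and> X \<inter> Z = {} \<and> Y \<inter> Z = {} \<longrightarrow>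
        (indep X Y Z \<longleftrightarrow> m_separated V D B X Y Z))"

definition blanket_cond :: "('v set \<Rightarrow> 'v set \<Rightarrow> 'v set \<Rightarrow> bool) \<Rightarrow> 'v set \<Rightarrow> 'v \<Rightarrow> 'v set \<Rightarrow> bool" where
  "blanket_cond indep V T S \<longleftrightarrow> S \<subseteq> V - {T} \<and> indep (V - (S \<union> {T})) {T} S"

definition is_markov_blanket :: "('v set \<Rightarrow> 'v set \<Rightarrow> 'v set \<Rightarrow> bool) \<Rightarrow> 'v set \<Rightarrow> 'v \<Rightarrow> 'v set \<Rightarrow> bool" where
  "is_markov_blanket indep V T S \<longleftrightarrow>
     blanket_cond indep V T S \<and> (\<forall>S'. S' \<subset> S \<longrightarrow> \<not> blanket_cond indep V T S')"

text \<open>Forward phase: pfbp_forward indep T S R S' means that the forward phase started with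
  selected set S and remaining set R can end with selected set S'.\<close>
inductive pfbp_forward :: "('v set \<Rightarrow> 'v set \<Rightarrow> 'v set \<Rightarrow> bool) \<Rightarrow> 'v \<Rightarrow> 'v set \<Rightarrow> 'v set \<Rightarrow> 'v set \<Rightarrow> bool"
  for indep :: "'v set \<Rightarrow> 'v set \<Rightarrow> 'v set \<Rightarrow> bool" and T :: 'v where
  fwd_stop: "R' = {X \<in> R. \<not> indep {X} {T} S} \<Longrightarrow> \<not> (\<exists>X\<in>R'. \<not> indep {X} {T} S)
     \<Longrightarrow> pfbp_forward indep T S R S"
| fwd_add: "R' = {X \<in> R. \<not> indep {X} {T} S} \<Longrightarrow> X \<in> R' \<Longrightarrow> \<not> indep {X} {T} S
     \<Longrightarrow> pfbp_forward indep T (insert X S) (R' - {X}) S''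
     \<Longrightarrow> pfbp_forward indep T S R S''"

inductive pfbp_backward :: "('v set \<Rightarrow> 'v set \<Rightarrow> 'v set \<Rightarrow> bool) \<Rightarrow> 'v \<Rightarrow> 'v set \<Rightarrow> 'v set \<Rightarrow> bool"
  for indep :: "'v set \<Rightarrow> 'v set \<Rightarrow> 'v set \<Rightarrow> bool" and T :: 'v where
  bwd_stop: "\<not> (\<exists>X\<in>S. indep {X} {T} (S - {X})) \<Longrightarrow> pfbp_backward indep T S S"
| bwd_remove: "X \<in> S \<Longrightarrow> indep {X} {T} (S - {X})
     \<Longrightarrow> pfbp_backward indep T (S - {X}) S'' \<Longrightarrow> pfbp_backward indep T S S''"

definition pfbp_run :: "('v set \<Rightarrow> 'v set \<Rightarrow> 'v set \<Rightarrow> bool) \<Rightarrow> 'v set \<Rightarrow> 'v \<Rightarrow> 'v set \<Rightarrow> 'v set \<Rightarrow> bool" where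
  "pfbp_run indep V T S S' \<longleftrightarrow>
     (\<exists>S1. pfbp_forward indep T S ((V - {T}) - S) S1 \<and> pfbp_backward indep T S1 S')"

end

theory Submission
  imports Defs
begin

definition colw :: "'v set \<Rightarrow> ('v \<times> 'v) set \<Rightarrow> ('v \<times> 'v) set \<Rightarrow> 'v \<Rightarrow> 'v list \<Rightarrow> bool" where
  "colw V D B T ps \<longleftrightarrow> is_path V D B ps \<and> last ps = T \<and>
     (\<forall>i. 0 < i \<and> Suc i < length ps \<longrightarrow> collider_at D B ps i)"

definition Cm :: "'v set \<Rightarrow> ('v \<times> 'v) set \<Rightarrow> ('v \<times> 'v) set \<Rightarrow> 'v \<Rightarrow> nat \<Rightarrow> 'v set" where
  "Cm V D B T m = {Y. \<exists>ps. colw V D B T ps \<and> hd ps = Y \<and> length ps \<le> m}"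

definition Call :: "'v set \<Rightarrow> ('v \<times> 'v) set \<Rightarrow> ('v \<times> 'v) set \<Rightarrow> 'v \<Rightarrow> 'v set" where
  "Call V D B T = {Y. \<exists>ps. colw V D B T ps \<and> hd ps = Y}"

lemma drop_path:
  assumes "is_path V D B ps" "j + 2 \<le> length ps"
  shows "is_path V D B (drop j ps)"
proof -
  have "\<forall>i. Suc i < length (drop j ps) \<longrightarrow> adjacent D B (drop j ps ! i) (drop j ps ! Suc i)"
  proof (intro allI impI)
    fix i assume "Suc i < length (drop j ps)"
    then have "Suc (j + i) < length ps" by simp
    then have "adjacent D B (ps ! (j+i)) (ps ! Suc (j+i))" using assms(1) unfolding is_path_def by blast
    then show "adjacent D B (drop j ps ! i) (drop j ps ! Suc i)" using assms(2) by simp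
  qed
  then show ?thesis using assms unfolding is_path_def
    by (auto dest: in_set_dropD)
qed

lemma drop_colw:
  assumes "is_path V D B ps" "last ps = T" "Suc j < length ps"
    "\<forall>i. j < i \<and> Suc i < length ps \<longrightarrow> collider_at D B ps i"
  shows "colw V D B T (drop j ps) \<and> hd (drop j ps) = ps ! j \<and> length (drop j ps) \<le> length ps"
proof -
  have c: "\<forall>i. 0 < i \<and> Suc i < length (drop j ps) \<longrightarrow> collider_at D B (drop j ps) i"
  proof (intro allI impI)
    fix i assume a: "0 < i \<and> Suc i < length (drop j ps)"
    then have "collider_at D B ps (j + i)" using assms(4) by auto
    moreover have "drop j ps ! (i - 1) = ps ! (j + i - 1)"
      using a assms(3) by simp
    moreover have "drop j ps ! i = ps ! (j + i)" using assms(3) by simp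
    moreover have "drop j ps ! Suc i = ps ! Suc (j + i)" using assms(3) by simp
    ultimately show "collider_at D B (drop j ps) i"
      unfolding collider_at_def by simp
  qed
  show ?thesis using drop_path[OF assms(1)] assms c unfolding colw_def
    by (simp add: hd_drop_conv_nth)
qed

lemma colw_len: "colw V D B T ps \<Longrightarrow> finite V \<Longrightarrow> length ps \<le> card V"
  unfolding colw_def is_path_def by (metis card_mono distinct_card)

lemma colw_hd: "colw V D B T ps \<Longrightarrow> hd ps \<in> V - {T}"
proof -
  assume a: "colw V D B T ps"
  then have p: "length ps \<ge> 2" "distinct ps" "set ps \<subseteq> V" "last ps = T"
    unfolding colw_def is_path_def by auto
  then have ne: "ps \<noteq> []" by auto
  then have "hd ps = ps ! 0" "last ps = ps ! (length ps - 1)"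
    by (simp_all add: hd_conv_nth last_conv_nth)
  moreover have "ps ! 0 \<noteq> ps ! (length ps - 1)"
  proof -
    have "0 < length ps" "length ps - 1 < length ps" "0 \<noteq> length ps - 1" using p(1) by auto
    then have "ps ! 0 = ps ! (length ps - 1) \<longleftrightarrow> 0 = length ps - 1"
      using nth_eq_iff_index_eq[OF p(2)] by simp
    then show ?thesis using p(1) by simp
  qed
  moreover have "hd ps \<in> set ps" using ne by simp
  ultimately show ?thesis using p(3,4) by (metis DiffI singletonD subsetD)
qed

lemma colw_dep:
  assumes "colw V D B T ps" "\<forall>i. 0 < i \<and> Suc i < length ps \<longrightarrow> ps ! i \<in> W"
  shows "\<not> m_separated V D B {hd ps} {T} W"
proof -
  have "m_connecting D B W ps" using assms unfolding colw_def m_connecting_def ancestor_def by auto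
  then show ?thesis using assms(1) unfolding m_separated_def colw_def by auto
qed

lemma sep_core:
  assumes "is_path V D B ps" "last ps = T" "m_connecting D B W ps" "Call V D B T \<subseteq> W"
  shows "hd ps \<in> Call V D B T"
proof -
  let ?P = "\<lambda>j. \<forall>i. j < i \<and> Suc i < length ps \<longrightarrow> collider_at D B ps i"
  have L: "length ps \<ge> 2" using assms(1) unfolding is_path_def by auto
  have P0: "?P 0"
  proof (rule inc_induct[of 0 "length ps - 2"])
    show "0 \<le> length ps - 2" by simp
    show "?P (length ps - 2)" by auto
  next
    fix n assume n: "0 \<le> n" "n < length ps - 2" and IH: "?P (Suc n)"
    have "colw V D B T (drop (Suc n) ps) \<and> hd (drop (Suc n) ps) = ps ! Suc n"
      using drop_colw[OF assms(1,2) _ IH] n by auto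
    then have "ps ! Suc n \<in> Call V D B T" unfolding Call_def by blast
    then have "ps ! Suc n \<in> W" using assms(4) by auto
    moreover have "0 < Suc n \<and> Suc (Suc n) < length ps" using n by simp
    ultimately have "collider_at D B ps (Suc n)" using assms(3) unfolding m_connecting_def by blast
    then show "?P n" using IH by (metis Suc_lessI)
  qed
  have "Suc 0 < length ps" using L by simp
  then have "colw V D B T (drop 0 ps)"
    using drop_colw[OF assms(1,2) _ P0] by simp
  then have "colw V D B T ps" by simp
  then show ?thesis unfolding Call_def by blast
qed

lemma fwd_mono: "pfbp_forward indep T S R S'' \<Longrightarrow> S \<subseteq> S''"
  by (induction rule: pfbp_forward.induct) auto

lemma fwd_sub: "pfbp_forward indep T S R S'' \<Longrightarrow> S \<subseteq> F \<Longrightarrow> R \<subseteq> F \<Longrightarrow> S'' \<subseteq> F"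
  by (induction rule: pfbp_forward.induct) auto

lemma fwd_keep: "pfbp_forward indep T S R S'' \<Longrightarrow> S \<subseteq> F \<Longrightarrow> R \<subseteq> F \<Longrightarrow> Y \<in> R \<Longrightarrow>
  (\<forall>S'. S \<subseteq> S' \<longrightarrow> S' \<subseteq> F \<longrightarrow> Y \<notin> S' \<longrightarrow> \<not> indep {Y} {T} S') \<Longrightarrow> Y \<in> S''"
proof (induction rule: pfbp_forward.induct)
  case (fwd_stop R' R S)
  show ?case
  proof (rule ccontr)
    assume "Y \<notin> S"
    then have "\<not> indep {Y} {T} S" using fwd_stop.prems(1,4) by simp
    then have "Y \<in> R'" using fwd_stop.hyps(1) fwd_stop.prems(3) by simp
    then show False using fwd_stop.hyps(2) \<open>\<not> indep {Y} {T} S\<close> by simp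
  qed
next
  case (fwd_add R' R S X S'')
  show ?case
  proof (cases "Y \<in> insert X S")
    case True
    then show ?thesis using fwd_mono[OF fwd_add(4)] by blast
  next
    case False
    then have "\<not> indep {Y} {T} S" using fwd_add.prems(1,4) by simp
    then have YR: "Y \<in> R' - {X}" using False fwd_add.hyps(1) fwd_add.prems(3) by simp
    have XF: "insert X S \<subseteq> F" using fwd_add.hyps(1,2) fwd_add.prems(1,2) by auto
    have RF: "R' - {X} \<subseteq> F" using fwd_add.hyps(1) fwd_add.prems(2) by auto
    have H: "\<forall>S'. insert X S \<subseteq> S' \<longrightarrow> S' \<subseteq> F \<longrightarrow> Y \<notin> S' \<longrightarrow> \<not> indep {Y} {T} S'"
      using fwd_add.prems(4) by auto
    show ?thesis by (rule fwd_add.IH[OF XF RF YR H])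
  qed
qed

lemma bwd_sub: "pfbp_backward indep T S S'' \<Longrightarrow> S'' \<subseteq> S"
  by (induction rule: pfbp_backward.induct) auto

lemma bwd_final: "pfbp_backward indep T S S'' \<Longrightarrow> \<not> (\<exists>X\<in>S''. indep {X} {T} (S'' - {X}))"
  by (induction rule: pfbp_backward.induct) auto

lemma bwd_keep: "pfbp_backward indep T S S'' \<Longrightarrow> S \<subseteq> F \<Longrightarrow> Q \<subseteq> S \<Longrightarrow>
  (\<forall>Z\<in>Q. \<forall>W. Q - {Z} \<subseteq> W \<longrightarrow> W \<subseteq> F \<longrightarrow> Z \<notin> W \<longrightarrow> \<not> indep {Z} {T} W) \<Longrightarrow> Q \<subseteq> S''"
proof (induction rule: pfbp_backward.induct)
  case (bwd_stop S)
  then show ?case by blast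
next
  case (bwd_remove X S S2)
  have "X \<notin> Q"
  proof
    assume XQ: "X \<in> Q"
    have "Q - {X} \<subseteq> S - {X}" using bwd_remove.prems(2) by blast
    moreover have "S - {X} \<subseteq> F" using bwd_remove.prems(1) by blast
    ultimately have "\<not> indep {X} {T} (S - {X})" using bwd_remove.prems(3) XQ by blast
    then show False using bwd_remove.hyps(2) by simp
  qed
  then have "Q \<subseteq> S - {X}" using bwd_remove.prems(2) by blast
  moreover have "S - {X} \<subseteq> F" using bwd_remove.prems(1) by blast
  ultimately show ?case using bwd_remove.IH bwd_remove.prems(3) by simp
qed

lemma faith_iff:
  assumes "faithful_to indep V D B" "Y \<in> V - {T}" "W \<subseteq> V - {T}" "Y \<notin> W" "T \<in> V"
  shows "indep {Y} {T} W \<longleftrightarrow> m_separated V D B {Y} {T} W"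
proof -
  have H: "\<forall>X Y Z. X \<subseteq> V \<and> Y \<subseteq> V \<and> Z \<subseteq> V \<and> X \<inter> Y = {} \<and> X \<inter> Z = {} \<and> Y \<inter> Z = {} \<longrightarrow>
        (indep X Y Z \<longleftrightarrow> m_separated V D B X Y Z)" using assms(1) unfolding faithful_to_def by blast
  have "{Y} \<subseteq> V \<and> {T} \<subseteq> V \<and> W \<subseteq> V \<and> {Y} \<inter> {T} = {} \<and> {Y} \<inter> W = {} \<and> {T} \<inter> W = {}"
    using assms by auto
  then show ?thesis by (rule mp[OF H[THEN spec, THEN spec, THEN spec, of "{Y}" "{T}" W]])
qed

lemma Cm_interior:
  assumes "colw V D B T ps" "0 < i" "Suc i < length ps" "length ps \<le> Suc m"
  shows "ps ! i \<in> Cm V D B T m"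
proof -
  have "colw V D B T (drop i ps) \<and> hd (drop i ps) = ps ! i \<and> length (drop i ps) \<le> length ps"
    using drop_colw[of V D B ps T i] assms unfolding colw_def by auto
  moreover have "length (drop i ps) \<le> m" using assms by simp
  ultimately show ?thesis unfolding Cm_def by blast
qed

lemma colw_interior_neq:
  assumes "colw V D B T ps" "0 < i" "Suc i < length ps"
  shows "ps ! i \<noteq> hd ps"
proof -
  have "distinct ps" "ps \<noteq> []" using assms unfolding colw_def is_path_def by auto
  then show ?thesis using assms nth_eq_iff_index_eq[of ps i 0] by (simp add: hd_conv_nth)
qed

lemma run_step:
  assumes fa: "faithful_to indep V D B" and TV: "T \<in> V"
    and run: "pfbp_run indep V T S S'" and SF: "S \<subseteq> V - {T}" and CS: "Cm V D B T m \<subseteq> S"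
  shows "Cm V D B T (Suc m) \<subseteq> S'"
proof -
  obtain S1 where f: "pfbp_forward indep T S ((V - {T}) - S) S1" and b: "pfbp_backward indep T S1 S'"
    using run unfolding pfbp_run_def by blast
  have S1F: "S1 \<subseteq> V - {T}" using fwd_sub[OF f SF] by simp
  have dep: "\<not> indep {Y} {T} W" if tt: "Y \<in> Cm V D B T (Suc m)" "Cm V D B T m \<subseteq> W"
      "W \<subseteq> V - {T}" "Y \<notin> W" for Y W
  proof -
    obtain ps where ps: "colw V D B T ps" "hd ps = Y" "length ps \<le> Suc m"
      using tt(1) unfolding Cm_def by blast
    have "\<forall>i. 0 < i \<and> Suc i < length ps \<longrightarrow> ps ! i \<in> W"
    proof (intro allI impI)
      fix i assume "0 < i \<and> Suc i < length ps"
      then have "ps ! i \<in> Cm V D B T m" using Cm_interior[OF ps(1) _ _ ps(3)] by simp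
      then show "ps ! i \<in> W" using tt(2) by (rule subsetD[rotated])
    qed
    then have "\<not> m_separated V D B {hd ps} {T} W" by (rule colw_dep[OF ps(1)])
    then have "\<not> m_separated V D B {Y} {T} W" using ps(2) by simp
    moreover have "Y \<in> V - {T}" using colw_hd[OF ps(1)] ps(2) by simp
    ultimately show ?thesis using faith_iff[OF fa _ tt(3,4) TV] by simp
  qed
  have Q1: "Cm V D B T (Suc m) \<subseteq> S1"
  proof
    fix Y assume Y: "Y \<in> Cm V D B T (Suc m)"
    show "Y \<in> S1"
    proof (cases "Y \<in> S")
      case True then show ?thesis using fwd_mono[OF f] by (rule subsetD[rotated])
    next
      case False
      obtain ps where ps: "colw V D B T ps" "hd ps = Y" using Y unfolding Cm_def by blast
      have "Y \<in> V - {T}" using colw_hd[OF ps(1)] ps(2) by simp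
      then have YR: "Y \<in> (V - {T}) - S" using False by simp
      have H: "\<forall>S'. S \<subseteq> S' \<longrightarrow> S' \<subseteq> V - {T} \<longrightarrow> Y \<notin> S' \<longrightarrow> \<not> indep {Y} {T} S'"
      proof (intro allI impI)
        fix S' assume "S \<subseteq> S'" "S' \<subseteq> V - {T}" "Y \<notin> S'"
        moreover have "Cm V D B T m \<subseteq> S'" using CS \<open>S \<subseteq> S'\<close> by (rule order_trans)
        ultimately show "\<not> indep {Y} {T} S'" using dep[OF Y] by simp
      qed
      show ?thesis by (rule fwd_keep[OF f SF _ YR H]) simp
    qed
  qed
  have "\<forall>Z\<in>Cm V D B T (Suc m). \<forall>W. Cm V D B T (Suc m) - {Z} \<subseteq> W \<longrightarrow> W \<subseteq> V - {T} \<longrightarrow> Z \<notin> W \<longrightarrow> \<not> indep {Z} {T} W"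
  proof (intro ballI allI impI)
    fix Z W assume Z: "Z \<in> Cm V D B T (Suc m)" and W: "Cm V D B T (Suc m) - {Z} \<subseteq> W" "W \<subseteq> V - {T}" "Z \<notin> W"
    obtain ps where ps: "colw V D B T ps" "hd ps = Z" "length ps \<le> Suc m"
      using Z unfolding Cm_def by blast
    have "\<forall>i. 0 < i \<and> Suc i < length ps \<longrightarrow> ps ! i \<in> W"
    proof (intro allI impI)
      fix i assume i: "0 < i \<and> Suc i < length ps"
      have "ps ! i \<in> Cm V D B T (Suc m)" using Cm_interior[OF ps(1), of i "Suc m"] i ps(3) by simp
      moreover have "ps ! i \<noteq> Z" using colw_interior_neq[OF ps(1)] i ps(2) by simp
      ultimately have "ps ! i \<in> Cm V D B T (Suc m) - {Z}" by simp
      then show "ps ! i \<in> W" using W(1) by (rule subsetD[rotated])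
    qed
    then have "\<not> m_separated V D B {hd ps} {T} W" by (rule colw_dep[OF ps(1)])
    then have "\<not> m_separated V D B {Z} {T} W" using ps(2) by simp
    moreover have "Z \<in> V - {T}" using colw_hd[OF ps(1)] ps(2) by simp
    ultimately show "\<not> indep {Z} {T} W" using faith_iff[OF fa _ W(2,3) TV] by simp
  qed
  then show ?thesis by (rule bwd_keep[OF b S1F Q1])
qed

lemma Cm_Call: "Cm V D B T m \<subseteq> Call V D B T"
  unfolding Cm_def Call_def by blast

lemma Call_Cm:
  assumes fin: "finite V" and k: "card V \<le> k"
  shows "Call V D B T \<subseteq> Cm V D B T k"
proof
  fix Y assume "Y \<in> Call V D B T"
  then obtain ps where ps: "colw V D B T ps" "hd ps = Y" unfolding Call_def by blast
  have "length ps \<le> k" using colw_len[OF ps(1) fin] k by simp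
  then show "Y \<in> Cm V D B T k" using ps unfolding Cm_def by blast
qed

lemma Cm0: "Cm V D B T 0 = {}"
  unfolding Cm_def colw_def is_path_def by auto

lemma sep_of_Call:
  assumes "Call V D B T \<subseteq> W" "X \<notin> Call V D B T"
  shows "m_separated V D B {X} {T} W"
  unfolding m_separated_def
proof
  assume "\<exists>ps. is_path V D B ps \<and> hd ps \<in> {X} \<and> last ps \<in> {T} \<and> m_connecting D B W ps"
  then obtain ps where ps: "is_path V D B ps" "hd ps = X" "last ps = T" "m_connecting D B W ps" by auto
  then have "hd ps \<in> Call V D B T" using sep_core[OF ps(1,3,4) assms(1)] by simp
  then show False using ps(2) assms(2) by simp
qed

lemma run_C:
  assumes fa: "faithful_to indep V D B" and TV: "T \<in> V" and fin: "finite V"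
    and run: "pfbp_run indep V T S S'" and SF: "S \<subseteq> V - {T}" and CS: "Call V D B T \<subseteq> S"
  shows "S' = Call V D B T"
proof -
  obtain S1 where f: "pfbp_forward indep T S ((V - {T}) - S) S1" and b: "pfbp_backward indep T S1 S'"
    using run unfolding pfbp_run_def by blast
  have S'F: "S' \<subseteq> V - {T}" using bwd_sub[OF b] fwd_sub[OF f SF] by (rule order_trans) simp
  have "Cm V D B T (card V) \<subseteq> S" using Cm_Call CS by (rule order_trans)
  then have "Cm V D B T (Suc (card V)) \<subseteq> S'" by (rule run_step[OF fa TV run SF])
  moreover have "Call V D B T \<subseteq> Cm V D B T (Suc (card V))" using Call_Cm[OF fin] by simp
  ultimately have C1: "Call V D B T \<subseteq> S'" by (rule order_trans[rotated])
  have "S' \<subseteq> Call V D B T"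
  proof
    fix X assume X: "X \<in> S'"
    show "X \<in> Call V D B T"
    proof (rule ccontr)
      assume nX: "X \<notin> Call V D B T"
      have "Call V D B T \<subseteq> S' - {X}" using C1 nX by blast
      then have "m_separated V D B {X} {T} (S' - {X})" using nX by (rule sep_of_Call)
      moreover have "X \<in> V - {T}" using X S'F by blast
      moreover have "S' - {X} \<subseteq> V - {T}" using S'F by blast
      ultimately have "indep {X} {T} (S' - {X})" using faith_iff[OF fa _ _ _ TV] by simp
      then show False using bwd_final[OF b] X by simp
    qed
  qed
  then show ?thesis using C1 by (rule antisym)
qed

lemma mb_Call:
  assumes fa: "faithful_to indep V D B" and TV: "T \<in> V"
  shows "is_markov_blanket indep V T (Call V D B T)"
proof -
  let ?C = "Call V D B T"
  have H: "\<forall>X Y Z. X \<subseteq> V \<and> Y \<subseteq> V \<and> Z \<subseteq> V \<and> X \<inter> Y = {} \<and> X \<inter> Z = {} \<and> Y \<inter> Z = {} \<longrightarrow>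
        (indep X Y Z \<longleftrightarrow> m_separated V D B X Y Z)" using fa unfolding faithful_to_def by blast
  have CF: "?C \<subseteq> V - {T}"
  proof
    fix Y assume "Y \<in> ?C"
    then obtain ps where ps: "colw V D B T ps" "hd ps = Y" unfolding Call_def by blast
    show "Y \<in> V - {T}" using colw_hd[OF ps(1)] ps(2) by simp
  qed
  have "m_separated V D B (V - (?C \<union> {T})) {T} ?C"
    unfolding m_separated_def
  proof
    assume "\<exists>ps. is_path V D B ps \<and> hd ps \<in> V - (?C \<union> {T}) \<and> last ps \<in> {T} \<and> m_connecting D B ?C ps"
    then obtain ps where ps: "is_path V D B ps" "hd ps \<in> V - (?C \<union> {T})" "last ps = T" "m_connecting D B ?C ps" by auto
    have "hd ps \<in> ?C" using sep_core[OF ps(1,3,4)] by simp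
    then show False using ps(2) by simp
  qed
  moreover have "V - (?C \<union> {T}) \<subseteq> V \<and> {T} \<subseteq> V \<and> ?C \<subseteq> V \<and> (V - (?C \<union> {T})) \<inter> {T} = {} \<and>
      (V - (?C \<union> {T})) \<inter> ?C = {} \<and> {T} \<inter> ?C = {}" using CF TV by auto
  then have "indep (V - (?C \<union> {T})) {T} ?C \<longleftrightarrow> m_separated V D B (V - (?C \<union> {T})) {T} ?C"
    by (rule mp[OF H[THEN spec, THEN spec, THEN spec, of "V - (?C \<union> {T})" "{T}" ?C]])
  ultimately have "indep (V - (?C \<union> {T})) {T} ?C" by simp
  then have BC: "blanket_cond indep V T ?C" using CF unfolding blanket_cond_def by blast
  have "\<not> blanket_cond indep V T S'" if sub: "S' \<subset> ?C" for S'
  proof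
    assume bc: "blanket_cond indep V T S'"
    then have S'F: "S' \<subseteq> V - {T}" and ind: "indep (V - (S' \<union> {T})) {T} S'"
      unfolding blanket_cond_def by auto
    have "V - (S' \<union> {T}) \<subseteq> V \<and> {T} \<subseteq> V \<and> S' \<subseteq> V \<and> (V - (S' \<union> {T})) \<inter> {T} = {} \<and>
      (V - (S' \<union> {T})) \<inter> S' = {} \<and> {T} \<inter> S' = {}" using S'F TV by auto
    then have "indep (V - (S' \<union> {T})) {T} S' \<longleftrightarrow> m_separated V D B (V - (S' \<union> {T})) {T} S'"
      by (rule mp[OF H[THEN spec, THEN spec, THEN spec, of "V - (S' \<union> {T})" "{T}" S']])
    then have ms: "m_separated V D B (V - (S' \<union> {T})) {T} S'" using ind by simp
    obtain Y where Y: "Y \<in> ?C" "Y \<notin> S'" using sub by blast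
    obtain ps where ps: "colw V D B T ps" "hd ps = Y" using Y(1) unfolding Call_def by blast
    have p: "is_path V D B ps" "last ps = T" and col: "\<forall>i. 0 < i \<and> Suc i < length ps \<longrightarrow> collider_at D B ps i"
      using ps(1) unfolding colw_def by auto
    have L: "length ps \<ge> 2" using p(1) unfolding is_path_def by simp
    let ?J = "{j. j < length ps - 1 \<and> ps ! j \<notin> S'}"
    have "ps \<noteq> []" using L by auto
    then have h0: "hd ps = ps ! 0" by (simp add: hd_conv_nth)
    have "0 \<in> ?J" using L Y(2) ps(2) h0 by simp
    moreover have finJ: "finite ?J" by simp
    ultimately have jJ: "Max ?J \<in> ?J" using Max_in[OF finJ] by (metis empty_iff)
    have jmax: "\<And>i. i \<in> ?J \<Longrightarrow> i \<le> Max ?J" using Max_ge[OF finJ] by simp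
    define j where "j = Max ?J"
    have j1: "Suc j < length ps" "ps ! j \<notin> S'" using jJ unfolding j_def by auto
    have after: "ps ! i \<in> S'" if "j < i" "Suc i < length ps" for i
    proof (rule ccontr)
      assume "ps ! i \<notin> S'"
      then have "i \<in> ?J" using that by simp
      then have "i \<le> j" using jmax unfolding j_def by blast
      then show False using that by simp
    qed
    have cj: "\<forall>i. j < i \<and> Suc i < length ps \<longrightarrow> collider_at D B ps i" using col by simp
    have dc: "colw V D B T (drop j ps) \<and> hd (drop j ps) = ps ! j"
      using drop_colw[OF p j1(1) cj] by simp
    have "\<forall>i. 0 < i \<and> Suc i < length (drop j ps) \<longrightarrow> drop j ps ! i \<in> S'"
    proof (intro allI impI)
      fix i assume i: "0 < i \<and> Suc i < length (drop j ps)"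
      then have "Suc (j + i) < length ps" "j < j + i" by auto
      then have "ps ! (j + i) \<in> S'" by (rule after[rotated])
      then show "drop j ps ! i \<in> S'" using j1(1) by simp
    qed
    then have "\<not> m_separated V D B {hd (drop j ps)} {T} S'" using colw_dep[of V D B T "drop j ps" S'] dc by simp
    then have nm: "\<not> m_separated V D B {ps ! j} {T} S'" using dc by simp
    have "ps ! j \<in> V - {T}" using colw_hd[of V D B T "drop j ps"] dc by simp
    then have inX: "ps ! j \<in> V - (S' \<union> {T})" using j1(2) by simp
    have "m_separated V D B {ps ! j} {T} S'"
      unfolding m_separated_def
    proof
      assume "\<exists>qs. is_path V D B qs \<and> hd qs \<in> {ps ! j} \<and> last qs \<in> {T} \<and> m_connecting D B S' qs"
      then obtain qs where "is_path V D B qs" "hd qs \<in> {ps ! j}" "last qs \<in> {T}" "m_connecting D B S' qs"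
        by blast
      moreover then have "hd qs \<in> V - (S' \<union> {T})" using inX by simp
      ultimately show False using ms unfolding m_separated_def by blast
    qed
    then show False using nm by simp
  qed
  then show ?thesis using BC unfolding is_markov_blanket_def by blast
qed

theorem theorem2:
  fixes V :: "'v set" and T :: 'v
    and D B :: "('v \<times> 'v) set"
    and indep :: "'v set \<Rightarrow> 'v set \<Rightarrow> 'v set \<Rightarrow> bool"
    and Ss :: "nat \<Rightarrow> 'v set"
  assumes "finite V" and "T \<in> V"
    and "is_dmag V D B"
    and "faithful_to indep V D B"
    and "Ss 0 = {}"
    and "\<forall>i. pfbp_run indep V T (Ss i) (Ss (Suc i))"
  shows "(\<exists>n. Ss (Suc n) = Ss n) \<and>
         (\<forall>n. Ss (Suc n) = Ss n \<longrightarrow> is_markov_blanket indep V T (Ss n))"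
proof -
  note fin = assms(1) and TV = assms(2) and fa = assms(4) and S0 = assms(5) and runs = assms(6)
  have SF: "Ss n \<subseteq> V - {T}" for n
  proof (induction n)
    case 0 then show ?case using S0 by simp
  next
    case (Suc n)
    obtain S1 where f: "pfbp_forward indep T (Ss n) ((V - {T}) - Ss n) S1"
      and b: "pfbp_backward indep T S1 (Ss (Suc n))"
      using runs unfolding pfbp_run_def by blast
    show ?case using fwd_sub[OF f Suc] bwd_sub[OF b] by blast
  qed
  have inv: "Cm V D B T n \<subseteq> Ss n" for n
  proof (induction n)
    case 0 then show ?case by (simp add: Cm0)
  next
    case (Suc n)
    show ?case using run_step[OF fa TV spec[OF runs, of n] SF Suc] by simp
  qed
  let ?N = "card V"
  have "Call V D B T \<subseteq> Ss ?N" using Call_Cm[OF fin order_refl] inv[of ?N] by (rule order_trans)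
  then have e1: "Ss (Suc ?N) = Call V D B T" using run_C[OF fa TV fin spec[OF runs, of ?N] SF] by simp
  then have "Call V D B T \<subseteq> Ss (Suc ?N)" by simp
  then have e2: "Ss (Suc (Suc ?N)) = Call V D B T" using run_C[OF fa TV fin spec[OF runs, of "Suc ?N"] SF] by simp
  have part1: "\<exists>n. Ss (Suc n) = Ss n" using e1 e2 by (intro exI[of _ "Suc ?N"]) simp
  have part2: "is_markov_blanket indep V T (Ss n)" if eq: "Ss (Suc n) = Ss n" for n
  proof -
    have r: "pfbp_run indep V T (Ss n) (Ss n)" using spec[OF runs, of n] eq by simp
    have "Cm V D B T m \<subseteq> Ss n" for m
    proof (induction m)
      case 0 then show ?case by (simp add: Cm0)
    next
      case (Suc m) then show ?case by (rule run_step[OF fa TV r SF])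
    qed
    then have "Call V D B T \<subseteq> Ss n" using Call_Cm[OF fin order_refl] by (meson order_trans)
    then have "Ss n = Call V D B T" by (rule run_C[OF fa TV fin r SF])
    then show ?thesis using mb_Call[OF fa TV] by simp
  qed
  show ?thesis using part1 part2 by blast
qed

end
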